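(* Let $n\ge 2$, $A\in\mathbb{Z}^{d\times n}$, $\mathbf{b}\in\mathbb{Z}^d$, $\mathbf{c}\in\mathbb{Z}^n$, $\mathbf{u}\in\mathbb{Z}_{\ge0}^n$, and consider the ILP $\min\{\mathbf{c}^\top\mathbf{x} : A\mathbf{x}=\mathbf{b},\ \mathbf{0}\le\mathbf{x}\le\mathbf{u},\ \mathbf{x}\in\mathbb{Z}^n\}$. Let $\mathbf{x}_0$ be a feasible solution that is not optimal and let $\mathbf{x}_{\min}$ be an optimal solution. Then every sequence of discrete deepest-descent augmentations (with respect to the Graver basis $\mathcal{G}(A)$) starting at $\mathbf{x}_0$ reaches an optimal solution after at most $$\max\{1,\ (4n-4)\log_2\big(\mathbf{c}^\top(\mathbf{x}_0-\mathbf{x}_{\min})\big)\}$$ augmentations.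
   Context: Feasible solutions are the $\mathbf{x}\in\mathbb{Z}^n$ with $A\mathbf{x}=\mathbf{b}$, $\mathbf{0}\le\mathbf{x}\le\mathbf{u}$. For $\mathbf{v},\mathbf{w}\in\mathbb{R}^n$ write $\mathbf{v}\sqsubseteq\mathbf{w}$ if $v_iw_i\ge0$ and $|v_i|\le|w_i|$ for all $i$. The Graver basis $\mathcal{G}(A)$ is the (finite) set of $\sqsubseteq$-minimal elements of $(\ker(A)\cap\mathbb{Z}^n)\setminus\{\mathbf{0}\}$. Discrete deepest-descent augmentation: given a feasible $\mathbf{x}_k$, among all pairs $(\mathbf{z},\alpha)$ with $\mathbf{z}\in\mathcal{G}(A)$, $\alpha$ a positive integer and $\mathbf{x}_k+\alpha\mathbf{z}$ feasible, choose one maximizing $-\alpha\,\mathbf{c}^\top\mathbf{z}$; if this maximum is positive, set $\mathbf{x}_{k+1}:=\mathbf{x}_k+\alpha\mathbf{z}$, otherwise stop. *)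

theory Defs
  imports "HOL-Analysis.Analysis"
begin

text \<open>Vectors in Z^n are int^'n, matrices in Z^(d x n) are int^'n^'d.\<close>

definition feasible :: "int^'n^'d \<Rightarrow> int^'d \<Rightarrow> int^'n \<Rightarrow> int^'n \<Rightarrow> bool" where
  "feasible A b u x \<longleftrightarrow> A *v x = b \<and> (\<forall>i. 0 \<le> x$i \<and> x$i \<le> u$i)"

definition objval :: "int^'n \<Rightarrow> int^'n \<Rightarrow> int" where
  "objval c x = (\<Sum>i\<in>UNIV. c$i * x$i)"

definition optimal :: "int^'n^'d \<Rightarrow> int^'d \<Rightarrow> int^'n \<Rightarrow> int^'n \<Rightarrow> int^'n \<Rightarrow> bool" where
  "optimal A b u c x \<longleftrightarrow> feasible A b u x \<and> (\<forall>y. feasible A b u y \<longrightarrow> objval c x \<le> objval c y)"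

definition conf_le :: "int^'n \<Rightarrow> int^'n \<Rightarrow> bool" where
  "conf_le v w \<longleftrightarrow> (\<forall>i. 0 \<le> v$i * w$i \<and> \<bar>v$i\<bar> \<le> \<bar>w$i\<bar>)"

definition graver :: "int^'n^'d \<Rightarrow> (int^'n) set" where
  "graver A = {z. A *v z = 0 \<and> z \<noteq> 0 \<and>
      \<not> (\<exists>w. A *v w = 0 \<and> w \<noteq> 0 \<and> conf_le w z \<and> w \<noteq> z)}"

definition dd_step :: "int^'n^'d \<Rightarrow> int^'d \<Rightarrow> int^'n \<Rightarrow> int^'n \<Rightarrow> int^'n \<Rightarrow> int^'n \<Rightarrow> bool" where
  "dd_step A b u c x x' \<longleftrightarrow>
     (\<exists>z \<alpha>. z \<in> graver A \<and> \<alpha> > 0 \<and> feasible A b u (x + \<alpha> *s z) \<and>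
        (\<forall>z' \<alpha>'. z' \<in> graver A \<and> \<alpha>' > 0 \<and> feasible A b u (x + \<alpha>' *s z') \<longrightarrow>
            - \<alpha>' * objval c z' \<le> - \<alpha> * objval c z) \<and>
        - \<alpha> * objval c z > 0 \<and> x' = x + \<alpha> *s z)"

end

theory Submission
  imports Defs
begin


definition norm1 :: "int^'n \<Rightarrow> int" where "norm1 x = (\<Sum>i\<in>UNIV. \<bar>x$i\<bar>)"

lemma conf_le_refl: "conf_le v v"
  by (simp add: conf_le_def)

lemma conf_le_trans: "conf_le a b \<Longrightarrow> conf_le b c \<Longrightarrow> conf_le a c"
  unfolding conf_le_def
proof (intro allI conjI)
  fix i assume h1: "\<forall>i. 0 \<le> a $ i * b $ i \<and> \<bar>a $ i\<bar> \<le> \<bar>b $ i\<bar>"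
    and h2: "\<forall>i. 0 \<le> b $ i * c $ i \<and> \<bar>b $ i\<bar> \<le> \<bar>c $ i\<bar>"
  have x: "0 \<le> a $ i * b $ i" "\<bar>a $ i\<bar> \<le> \<bar>b $ i\<bar>" "0 \<le> b $ i * c $ i" "\<bar>b $ i\<bar> \<le> \<bar>c $ i\<bar>"
    using h1 h2 by auto
  then show "\<bar>a $ i\<bar> \<le> \<bar>c $ i\<bar>" by linarith
  show "0 \<le> a $ i * c $ i" using x
    by (auto simp: zero_le_mult_iff abs_if split: if_splits)
qed

lemma norm1_nonneg: "norm1 v \<ge> 0"
  unfolding norm1_def by (simp add: sum_nonneg)

lemma norm1_pos: "v \<noteq> 0 \<Longrightarrow> norm1 v > 0"
proof -
  assume "v \<noteq> 0"
  then obtain j where j: "v$j \<noteq> 0" by (metis vec_eq_iff zero_index)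
  have "norm1 v \<ge> \<bar>v$j\<bar>" unfolding norm1_def
    by (rule member_le_sum) auto
  then show ?thesis using j by simp
qed

lemma conf_le_diff: "conf_le g v \<Longrightarrow> conf_le (v - g) v"
  unfolding conf_le_def
  by (auto simp: zero_le_mult_iff abs_if split: if_splits) (smt (verit) mult_nonneg_nonpos mult_nonpos_nonpos)+

lemma conf_abs_diff: "conf_le g v \<Longrightarrow> \<bar>(v - g)$i\<bar> = \<bar>v$i\<bar> - \<bar>g$i\<bar>"
  unfolding conf_le_def
  by (erule_tac x=i in allE) (auto simp: zero_le_mult_iff abs_if split: if_splits)

lemma norm1_diff: "conf_le g v \<Longrightarrow> norm1 (v - g) = norm1 v - norm1 g"
  unfolding norm1_def by (simp only: conf_abs_diff sum_subtractf)

lemma norm1_less: "conf_le w z \<Longrightarrow> w \<noteq> z \<Longrightarrow> norm1 w < norm1 z"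
proof -
  assume c: "conf_le w z" "w \<noteq> z"
  then have "z - w \<noteq> 0" by simp
  then have "norm1 (z - w) > 0" by (rule norm1_pos)
  with norm1_diff[OF c(1)] show ?thesis by simp
qed

lemma graver_below:
  assumes "A *v v = 0" "v \<noteq> 0"
  shows "\<exists>g. g \<in> graver A \<and> conf_le g v"
proof -
  let ?P = "\<lambda>w. A *v w = 0 \<and> w \<noteq> 0 \<and> conf_le w v"
  have "?P v" using assms conf_le_refl by auto
  then obtain w where w: "?P w" and min: "\<And>y. ?P y \<Longrightarrow> nat (norm1 w) \<le> nat (norm1 y)"
    using ex_has_least_nat[of ?P v "\<lambda>w. nat (norm1 w)"] by blast
  have "\<not> (\<exists>y. A *v y = 0 \<and> y \<noteq> 0 \<and> conf_le y w \<and> y \<noteq> w)"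
  proof
    assume "\<exists>y. A *v y = 0 \<and> y \<noteq> 0 \<and> conf_le y w \<and> y \<noteq> w"
    then obtain y where y: "A *v y = 0" "y \<noteq> 0" "conf_le y w" "y \<noteq> w" by blast
    have "?P y" using y w conf_le_trans by blast
    then have "nat (norm1 w) \<le> nat (norm1 y)" by (rule min)
    moreover have "norm1 y < norm1 w" using norm1_less y by blast
    ultimately show False using norm1_nonneg[of y] by simp
  qed
  then have "w \<in> graver A" using w unfolding graver_def by blast
  then show ?thesis using w by blast
qed

lemma decomp:
  "A *v v = 0 \<Longrightarrow> \<exists>gs. sum_list gs = v \<and> (\<forall>g\<in>set gs. g \<in> graver A \<and> conf_le g v)"
proof (induction "nat (norm1 v)" arbitrary: v rule: less_induct)
  case less
  show ?case
  proof (cases "v = 0")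
    case True then show ?thesis by (intro exI[of _ "[]"]) auto
  next
    case False
    then obtain g where g: "g \<in> graver A" "conf_le g v" using graver_below less.prems by blast
    have g0: "g \<noteq> 0" "A *v g = 0" using g(1) by (auto simp: graver_def)
    have "nat (norm1 (v - g)) < nat (norm1 v)"
      using norm1_diff[OF g(2)] norm1_pos[OF g0(1)] norm1_nonneg[of "v - g"] by simp
    moreover have "A *v (v - g) = 0" using less.prems g0 by (simp add: matrix_vector_mult_diff_distrib)
    ultimately obtain gs where gs: "sum_list gs = v - g" "\<forall>h\<in>set gs. h \<in> graver A \<and> conf_le h (v - g)"
      using less.hyps by blast
    show ?thesis
      using gs g conf_le_trans[OF _ conf_le_diff[OF g(2)]]
      by (intro exI[of _ "g # gs"]) auto
  qed
qed



lemma objval_add: "objval c (x + y) = objval c x + objval c y"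
  unfolding objval_def by (simp add: distrib_left sum.distrib)
lemma objval_diff: "objval c (x - y) = objval c x - objval c y"
  unfolding objval_def by (simp add: right_diff_distrib sum_subtractf)
lemma objval_smult: "objval c (k *s x) = k * objval c x"
  unfolding objval_def by (simp add: sum_distrib_left algebra_simps)
lemma objval_zero: "objval c 0 = 0"
  unfolding objval_def by simp
lemma objval_sum_list: "objval c (sum_list gs) = sum_list (map (objval c) gs)"
  by (induction gs) (auto simp: objval_add objval_zero)

lemma conf_comp:
  assumes "0 \<le> (w::int) * v" "\<bar>w\<bar> \<le> \<bar>v\<bar>"
  shows "(0 \<le> w \<and> w \<le> v) \<or> (v \<le> w \<and> w \<le> 0)"
proof -
  have "(0 \<le> w \<and> 0 \<le> v) \<or> (w \<le> 0 \<and> v \<le> 0)" using assms(1) by (simp add: zero_le_mult_iff)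
  then show ?thesis using assms(2) by linarith
qed

lemma feas_conf:
  assumes "feasible A b u x" "feasible A b u (x + v)" "A *v w = 0" "conf_le w v"
  shows "feasible A b u (x + w)"
  unfolding feasible_def
proof (intro conjI allI)
  show "A *v (x + w) = b" using assms(1,3) by (simp add: feasible_def matrix_vector_right_distrib)
  fix i
  have a: "0 \<le> x$i" "x$i \<le> u$i" "0 \<le> x$i + v$i" "x$i + v$i \<le> u$i"
    using assms(1,2) by (auto simp: feasible_def)
  have c: "0 \<le> w$i * v$i" "\<bar>w$i\<bar> \<le> \<bar>v$i\<bar>" using assms(4) by (auto simp: conf_le_def)
  have "(0 \<le> w$i \<and> w$i \<le> v$i) \<or> (v$i \<le> w$i \<and> w$i \<le> 0)" using conf_comp c by blast
  then show "0 \<le> (x + w) $ i" "(x + w) $ i \<le> u $ i" using a by auto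
qed

lemma improving_exists:
  assumes "feasible A b u x" "\<not> optimal A b u c x"
  shows "\<exists>z. z \<in> graver A \<and> feasible A b u (x + 1 *s z) \<and> objval c z < 0"
proof -
  obtain y where y: "feasible A b u y" "objval c y < objval c x"
    using assms unfolding optimal_def by (auto simp: not_le)
  define v where "v = y - x"
  have Av: "A *v v = 0" using y(1) assms(1) by (simp add: v_def feasible_def matrix_vector_mult_diff_distrib)
  obtain gs where gs: "sum_list gs = v" "\<forall>g\<in>set gs. g \<in> graver A \<and> conf_le g v"
    using decomp[OF Av] by blast
  have "objval c v < 0" using y by (simp add: v_def objval_diff)
  then have "sum_list (map (objval c) gs) < 0" using gs(1) objval_sum_list[of c gs] by simp
  have "\<exists>g\<in>set gs. objval c g < 0"
  proof (rule ccontr)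
    assume "\<not> (\<exists>g\<in>set gs. objval c g < 0)"
    then have "\<forall>x\<in>set (map (objval c) gs). 0 \<le> x" by auto
    then have "0 \<le> sum_list (map (objval c) gs)" using sum_list_nonneg by blast
    then show False using \<open>sum_list (map (objval c) gs) < 0\<close> by simp
  qed
  then obtain g where g: "g \<in> set gs" "objval c g < 0" by blast
  have gg: "g \<in> graver A" "conf_le g v" using gs g by auto
  have "feasible A b u (x + v)" using y(1) by (simp add: v_def)
  moreover have "A *v g = 0" using gg by (simp add: graver_def)
  ultimately have "feasible A b u (x + g)"
    using feas_conf[OF assms(1)] gg by blast
  then show ?thesis using gs g by auto
qed

lemma finite_box: "finite {z::int^'n. \<forall>i. \<bar>z$i\<bar> \<le> U}"
proof -
  have "{z::int^'n. \<forall>i. \<bar>z$i\<bar> \<le> U} \<subseteq> (\<lambda>f. vec_lambda f) ` (Pi\<^sub>E UNIV (\<lambda>_. {-U..U}))"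
  proof
    fix z :: "int^'n" assume "z \<in> {z. \<forall>i. \<bar>z$i\<bar> \<le> U}"
    then have h: "\<bar>z$i\<bar> \<le> U" for i by simp
    have "z$i \<in> {-U..U}" for i using h[of i] abs_ge_self[of "z$i"] abs_ge_minus_self[of "z$i"]
      unfolding atLeastAtMost_iff by linarith
    then have "(\<lambda>i. z$i) \<in> Pi\<^sub>E UNIV (\<lambda>_. {-U..U})" by auto
    then show "z \<in> (\<lambda>f. vec_lambda f) ` (Pi\<^sub>E UNIV (\<lambda>_. {-U..U}))"
      by (intro image_eqI[of _ _ "\<lambda>i. z$i"]) auto
  qed
  moreover have "finite (Pi\<^sub>E (UNIV::'n set) (\<lambda>_. {-U..U}))" by (intro finite_PiE) auto
  ultimately show ?thesis using finite_subset by blast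
qed

lemma steps_finite:
  fixes x :: "int^'n"
  assumes "feasible A b u x"
  shows "finite {(z, \<alpha>::int). z \<in> graver A \<and> \<alpha> > 0 \<and> feasible A b u (x + \<alpha> *s z)}"
proof -
  define U where "U = (\<Sum>i\<in>UNIV. u$i)"
  have uU: "u$i \<le> U" for i
  proof -
    have "\<forall>j. 0 \<le> u$j"
    proof
      fix j have "0 \<le> x$j \<and> x$j \<le> u$j" using assms by (simp add: feasible_def)
      then show "0 \<le> u$j" by linarith
    qed
    then show ?thesis unfolding U_def by (intro member_le_sum) auto
  qed
  have "{(z, \<alpha>::int). z \<in> graver A \<and> \<alpha> > 0 \<and> feasible A b u (x + \<alpha> *s z)}
        \<subseteq> {z::int^'n. \<forall>i. \<bar>z$i\<bar> \<le> U} \<times> {1..U}"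
  proof clarify
    fix z and \<alpha> :: int assume h: "z \<in> graver A" "0 < \<alpha>" "feasible A b u (x + \<alpha> *s z)"
    have b: "\<bar>\<alpha> * z$i\<bar> \<le> U" for i
    proof -
      have "0 \<le> x$i" "x$i \<le> u$i" "0 \<le> x$i + \<alpha> * z$i" "x$i + \<alpha> * z$i \<le> u$i"
        using assms h(3) by (auto simp: feasible_def)
      then show ?thesis using uU[of i] unfolding abs_le_iff by linarith
    qed
    have zi: "\<bar>z$i\<bar> \<le> \<bar>\<alpha> * z$i\<bar>" for i
    proof -
      have "1 * \<bar>z$i\<bar> \<le> \<alpha> * \<bar>z$i\<bar>" by (rule mult_right_mono) (use h(2) in auto)
      moreover have "\<bar>\<alpha> * z$i\<bar> = \<alpha> * \<bar>z$i\<bar>" using h(2) by (simp add: abs_mult)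
      ultimately show ?thesis by simp
    qed
    have "z \<noteq> 0" using h(1) by (simp add: graver_def)
    then obtain j where j: "z$j \<noteq> 0" by (metis vec_eq_iff zero_index)
    have "\<alpha> * 1 \<le> \<alpha> * \<bar>z$j\<bar>" by (rule mult_left_mono) (use j h(2) in auto)
    moreover have "\<bar>\<alpha> * z$j\<bar> = \<alpha> * \<bar>z$j\<bar>" using h(2) by (simp add: abs_mult)
    ultimately have "\<alpha> \<le> \<bar>\<alpha> * z$j\<bar>" by simp
    then have "\<alpha> \<le> U" using b[of j] by linarith
    moreover have "\<bar>z$i\<bar> \<le> U" for i using zi[of i] b[of i] by linarith
    ultimately show "z \<in> {z. \<forall>i. \<bar>z $ i\<bar> \<le> U} \<and> \<alpha> \<in> {1..U}"
      using h(2) by simp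
  qed
  moreover have "finite ({z::int^'n. \<forall>i. \<bar>z$i\<bar> \<le> U} \<times> {1..U})"
    using finite_box by blast
  ultimately show ?thesis using finite_subset by blast
qed

lemma dd_step_exists:
  assumes "feasible A b u x" "\<not> optimal A b u c x"
  shows "\<exists>y. dd_step A b u c x y"
proof -
  define S where "S = {(z, \<alpha>::int). z \<in> graver A \<and> \<alpha> > 0 \<and> feasible A b u (x + \<alpha> *s z)}"
  define f where "f = (\<lambda>(z, \<alpha>::int). - \<alpha> * objval c z)"
  obtain z0 where z0: "z0 \<in> graver A" "feasible A b u (x + 1 *s z0)" "objval c z0 < 0"
    using improving_exists[OF assms] by blast
  have inS: "(z0, 1) \<in> S" using z0 by (simp add: S_def)
  have fin: "finite S" using steps_finite[OF assms(1)] by (simp add: S_def)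
  have ne: "f ` S \<noteq> {}" using inS by blast
  obtain p where p: "p \<in> S" "f p = Max (f ` S)"
    using Max_in[OF finite_imageI[OF fin] ne] by auto
  obtain z \<alpha> where pz: "p = (z, \<alpha>)" by (cases p)
  have maxp: "f q \<le> f p" if "q \<in> S" for q
    using p(2) Max_ge[OF finite_imageI[OF fin]] that by auto
  have "f (z0, 1) \<le> f p" using maxp inS by blast
  then have pos: "- \<alpha> * objval c z > 0" using z0(3) by (simp add: f_def pz)
  show ?thesis
    unfolding dd_step_def
  proof (intro exI conjI allI impI)
    show "z \<in> graver A" "\<alpha> > 0" "feasible A b u (x + \<alpha> *s z)" using p(1) by (auto simp: S_def pz)
    show "- \<alpha> * objval c z > 0" by (rule pos)
    fix z' \<alpha>' assume "z' \<in> graver A \<and> \<alpha>' > 0 \<and> feasible A b u (x + \<alpha>' *s z')"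
    then have "(z', \<alpha>') \<in> S" by (simp add: S_def)
    then have "f (z', \<alpha>') \<le> f (z, \<alpha>)" using maxp pz by blast
    then show "- \<alpha>' * objval c z' \<le> - \<alpha> * objval c z" by (simp add: f_def)
  qed simp
qed



definition rv :: "int^'n \<Rightarrow> real^'n" where "rv w = (\<chi> i. real_of_int (w$i))"

lemma rv_nth[simp]: "rv w $ i = real_of_int (w$i)" by (simp add: rv_def)
lemma rv_add: "rv (x + y) = rv x + rv y" by (simp add: vec_eq_iff)
lemma rv_zero: "rv 0 = 0" by (simp add: vec_eq_iff)
lemma rv_sum_list: "rv (sum_list gs) = (\<Sum>i<length gs. rv (gs!i))"
proof -
  have "rv (sum_list gs) = sum_list (map rv gs)" by (induction gs) (auto simp: rv_add rv_zero)
  then show ?thesis by (simp add: sum_list_sum_nth atLeast0LessThan)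
qed
lemma objval_rv: "real_of_int (objval c w) = rv c \<bullet> rv w"
  by (simp add: objval_def inner_vec_def)

lemma sgn_conf:
  assumes "conf_le w v"
  shows "sgn (real_of_int (v$i)) * real_of_int (w$i) = real_of_int \<bar>w$i\<bar>"
proof -
  have "0 \<le> w$i * v$i" "\<bar>w$i\<bar> \<le> \<bar>v$i\<bar>" using assms by (auto simp: conf_le_def)
  then have "(0 \<le> w$i \<and> w$i \<le> v$i) \<or> (v$i \<le> w$i \<and> w$i \<le> 0)" by (rule conf_comp)
  then show ?thesis by (auto simp: sgn_if)
qed

lemma term_bound:
  fixes x v g :: "int^'n" and A :: "int^'n^'d"
  assumes fx: "feasible A b u x" and fv: "feasible A b u (x + v)"
    and g: "g \<in> graver A" "conf_le g v" and l: "l \<ge> 0"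
    and bnd: "\<And>i. l * real_of_int \<bar>g$i\<bar> \<le> real_of_int \<bar>v$i\<bar>"
    and maxp: "\<And>z' \<alpha>'. z' \<in> graver A \<Longrightarrow> \<alpha>' > 0 \<Longrightarrow> feasible A b u (x + \<alpha>' *s z') \<Longrightarrow> - \<alpha>' * objval c z' \<le> D"
    and Dpos: "D > 0"
  shows "l * real_of_int (- objval c g) \<le> 2 * real_of_int D"
proof -
  have Ag: "A *v g = 0" using g(1) by (simp add: graver_def)
  consider "- objval c g \<le> 0" | "- objval c g > 0" "l < 1" | "- objval c g > 0" "l \<ge> 1" by linarith
  then show ?thesis
  proof cases
    case 1
    then have "l * real_of_int (- objval c g) \<le> 0" using l by (simp add: mult_nonneg_nonpos)
    then show ?thesis using Dpos by linarith
  next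
    case 2
    have "feasible A b u (x + g)" using feas_conf[OF fx fv Ag g(2)] .
    then have "feasible A b u (x + 1 *s g)" by simp
    then have "- 1 * objval c g \<le> D" using maxp[OF g(1), of 1] by simp
    moreover have "l * real_of_int (- objval c g) \<le> 1 * real_of_int (- objval c g)"
      using 2 by (intro mult_right_mono) auto
    ultimately show ?thesis using Dpos by simp
  next
    case 3
    define k where "k = floor l"
    have k1: "k \<ge> 1" using 3 by (simp add: k_def)
    have kl: "real_of_int k \<le> l" "l < real_of_int k + 1" using k_def by linarith+
    have "conf_le (k *s g) v"
      unfolding conf_le_def
    proof (intro allI conjI)
      fix i
      have "0 \<le> g$i * v$i" using g(2) by (simp add: conf_le_def)
      then show "0 \<le> (k *s g) $ i * v $ i" using k1 by (simp add: mult.assoc)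
      have "real_of_int k * real_of_int \<bar>g$i\<bar> \<le> l * real_of_int \<bar>g$i\<bar>"
        using kl by (intro mult_right_mono) auto
      then have "real_of_int (k * \<bar>g$i\<bar>) \<le> real_of_int \<bar>v$i\<bar>" using bnd[of i] by simp
      then have "k * \<bar>g$i\<bar> \<le> \<bar>v$i\<bar>" by linarith
      then show "\<bar>(k *s g) $ i\<bar> \<le> \<bar>v $ i\<bar>" using k1 by (simp add: abs_mult)
    qed
    moreover have "A *v (k *s g) = 0"
    proof -
      have "(A *v (k *s g)) $ i = k * ((A *v g) $ i)" for i
        by (simp add: matrix_vector_mult_def sum_distrib_left algebra_simps)
      then show ?thesis using Ag by (simp add: vec_eq_iff)
    qed
    ultimately have "feasible A b u (x + k *s g)" using feas_conf[OF fx fv] by blast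
    then have "- k * objval c g \<le> D" using maxp[OF g(1)] k1 by auto
    then have r: "real_of_int k * real_of_int (- objval c g) \<le> real_of_int D"
      by (metis minus_mult_commute mult_minus_left of_int_le_iff of_int_mult)
    have "l * real_of_int (- objval c g) \<le> (2 * real_of_int k) * real_of_int (- objval c g)"
      using 3 kl k1 by (intro mult_right_mono) auto
    then show ?thesis using r by linarith
  qed
qed



lemma key_bound:
  fixes x v :: "int^'n" and A :: "int^'n^'d"
  assumes fx: "feasible A b u x" and fv: "feasible A b u (x + v)"
    and maxp: "\<And>z' \<alpha>'. z' \<in> graver A \<Longrightarrow> \<alpha>' > 0 \<Longrightarrow> feasible A b u (x + \<alpha>' *s z') \<Longrightarrow> - \<alpha>' * objval c z' \<le> D"
    and Dpos: "D > 0"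
  shows "real_of_int (- objval c v) \<le> 2 * real CARD('n) * real_of_int D"
proof (cases "v = 0")
  case True then show ?thesis using Dpos by (simp add: objval_zero)
next
  case False
  have Av: "A *v v = 0" using fx fv by (simp add: feasible_def matrix_vector_right_distrib)
  obtain gs where gs1: "sum_list gs = v" and gs2: "\<And>g. g \<in> set gs \<Longrightarrow> g \<in> graver A \<and> conf_le g v"
    using decomp[OF Av] by blast
  define a :: "real^'n" where "a = (\<chi> i. sgn (real_of_int (v$i)))"
  define \<phi> where "\<phi> w = a \<bullet> rv w" for w
  have phi_norm: "\<phi> w = real_of_int (norm1 w)" if "conf_le w v" for w
    unfolding \<phi>_def a_def norm1_def inner_vec_def using sgn_conf[OF that] by simp
  have phi_pos: "\<phi> w > 0" if "conf_le w v" "w \<noteq> 0" for w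
    using phi_norm[OF that(1)] norm1_pos[OF that(2)] by simp
  have gpos: "\<phi> g > 0" if "g \<in> set gs" for g
  proof -
    have "g \<in> graver A" "conf_le g v" using gs2[OF that] by auto
    then have "g \<noteq> 0" "conf_le g v" by (simp_all add: graver_def)
    then show ?thesis by (rule phi_pos[rotated])
  qed
  have vpos: "\<phi> v > 0" using phi_pos[OF conf_le_refl False] .
  define pt where "pt g = inverse (\<phi> g) *\<^sub>R rv g" for g
  define P where "P = pt ` set gs"
  have sumphi: "(\<Sum>i<length gs. \<phi> (gs!i)) = \<phi> v"
    unfolding \<phi>_def inner_sum_right[symmetric] rv_sum_list[symmetric] gs1 ..
  have inhull: "inverse (\<phi> v) *\<^sub>R rv v \<in> convex hull P"
  proof -
    have s1: "(\<Sum>i<length gs. \<phi> (gs!i) / \<phi> v) = 1"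
    proof -
      have "(\<Sum>i<length gs. \<phi> (gs!i) / \<phi> v) = (\<Sum>i<length gs. \<phi> (gs!i)) / \<phi> v"
        by (rule sum_divide_distrib[symmetric])
      then show ?thesis using sumphi vpos by simp
    qed
    have s2: "0 \<le> \<phi> (gs!i) / \<phi> v" and s3: "pt (gs!i) \<in> convex hull P" if "i \<in> {..<length gs}" for i
    proof -
      have gi: "gs!i \<in> set gs" using that by (intro nth_mem) simp
      show "0 \<le> \<phi> (gs!i) / \<phi> v" by (rule divide_nonneg_pos[OF less_imp_le[OF gpos[OF gi]] vpos])
      have "pt (gs!i) \<in> P" unfolding P_def using gi by (rule imageI)
      then show "pt (gs!i) \<in> convex hull P" by (rule hull_inc)
    qed
    have "(\<Sum>i<length gs. (\<phi> (gs!i) / \<phi> v) *\<^sub>R pt (gs!i)) \<in> convex hull P"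
      by (rule convex_sum[where a="\<lambda>i. \<phi> (gs!i) / \<phi> v" and y = "\<lambda>i. pt (gs!i)" and S = "{..<length gs}" and C = "convex hull P", OF finite_lessThan convex_convex_hull s1 s2 s3])
    moreover have "(\<Sum>i<length gs. (\<phi> (gs!i) / \<phi> v) *\<^sub>R pt (gs!i)) = inverse (\<phi> v) *\<^sub>R rv v"
    proof -
      have "(\<phi> (gs!i) / \<phi> v) *\<^sub>R pt (gs!i) = inverse (\<phi> v) *\<^sub>R rv (gs!i)" if "i < length gs" for i
      proof -
        have "\<phi> (gs!i) \<noteq> 0" using gpos[of "gs!i"] that by simp
        then show ?thesis by (simp add: pt_def divide_inverse)
      qed
      then have "(\<Sum>i<length gs. (\<phi> (gs!i) / \<phi> v) *\<^sub>R pt (gs!i)) = (\<Sum>i<length gs. inverse (\<phi> v) *\<^sub>R rv (gs!i))"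
        by (intro sum.cong) auto
      also have "\<dots> = inverse (\<phi> v) *\<^sub>R rv v"
        by (simp add: scaleR_sum_right[symmetric] rv_sum_list[symmetric] gs1)
      finally show ?thesis .
    qed
    ultimately show ?thesis by simp
  qed
  obtain T \<mu> where T: "finite T" "T \<subseteq> P" "card T \<le> aff_dim P + 1"
    and mu: "\<forall>p\<in>T. 0 \<le> \<mu> p" "sum \<mu> T = 1" "(\<Sum>p\<in>T. \<mu> p *\<^sub>R p) = inverse (\<phi> v) *\<^sub>R rv v"
    using inhull unfolding convex_hull_caratheodory_aff_dim by blast
  have "a \<noteq> 0"
  proof -
    obtain j where j: "v$j \<noteq> 0" using False by (metis vec_eq_iff zero_index)
    then have "a$j \<noteq> 0" by (simp add: a_def sgn_if)
    then show ?thesis by auto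
  qed
  have "P \<subseteq> {y. a \<bullet> y = 1}"
  proof
    fix y assume "y \<in> P"
    then obtain g where g: "g \<in> set gs" "y = pt g" unfolding P_def by blast
    have "a \<bullet> y = inverse (\<phi> g) * \<phi> g" by (simp add: g(2) pt_def \<phi>_def)
    then show "y \<in> {y. a \<bullet> y = 1}" using gpos[OF g(1)] by simp
  qed
  then have "aff_dim P \<le> aff_dim {y. a \<bullet> y = 1}" by (rule aff_dim_subset)
  also have "\<dots> = int CARD('n) - 1" using \<open>a \<noteq> 0\<close> by simp
  finally have cardT: "card T \<le> CARD('n)" using T(3) by linarith
  have "\<forall>p\<in>T. \<exists>g. g \<in> set gs \<and> p = pt g" using T(2) unfolding P_def by blast
  then obtain h where h: "\<And>p. p \<in> T \<Longrightarrow> h p \<in> set gs \<and> p = pt (h p)" by metis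
  define lam where "lam p = \<mu> p * \<phi> v / \<phi> (h p)" for p
  have lam0: "lam p \<ge> 0" if "p \<in> T" for p
  proof -
    have "\<phi> (h p) > 0" using gpos h[OF that] by blast
    moreover have "\<mu> p \<ge> 0" using mu(1) that by blast
    ultimately show ?thesis using vpos unfolding lam_def by simp
  qed
  have rep: "rv v = (\<Sum>p\<in>T. lam p *\<^sub>R rv (h p))"
  proof -
    have "rv v = \<phi> v *\<^sub>R (inverse (\<phi> v) *\<^sub>R rv v)" using vpos by simp
    also have "\<dots> = (\<Sum>p\<in>T. \<phi> v *\<^sub>R (\<mu> p *\<^sub>R p))" by (simp add: mu(3)[symmetric] scaleR_sum_right)
    also have "\<dots> = (\<Sum>p\<in>T. lam p *\<^sub>R rv (h p))"
    proof (intro sum.cong refl)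
      fix p assume "p \<in> T"
      then have e: "pt (h p) = p" using h by metis
      have gen: "\<phi> v *\<^sub>R (\<mu> p *\<^sub>R pt q) = (\<mu> p * \<phi> v / \<phi> q) *\<^sub>R rv q" for q
        by (simp add: pt_def divide_inverse algebra_simps)
      show "\<phi> v *\<^sub>R (\<mu> p *\<^sub>R p) = lam p *\<^sub>R rv (h p)"
        using gen[of "h p"] unfolding e lam_def .
    qed
    finally show ?thesis .
  qed
  have bnd: "lam p * real_of_int \<bar>h p $ i\<bar> \<le> real_of_int \<bar>v $ i\<bar>" if "p \<in> T" for p i
  proof -
    have "real_of_int \<bar>v$i\<bar> = sgn (real_of_int (v$i)) * real_of_int (v$i)"
      using sgn_conf[OF conf_le_refl, of v i] by simp
    also have "\<dots> = sgn (real_of_int (v$i)) * (\<Sum>q\<in>T. lam q * real_of_int (h q $ i))"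
      using arg_cong[OF rep, of "\<lambda>w. w $ i"] by (simp add: sum_component)
    also have "\<dots> = (\<Sum>q\<in>T. lam q * real_of_int \<bar>h q $ i\<bar>)"
      unfolding sum_distrib_left
    proof (intro sum.cong refl)
      fix q assume "q \<in> T"
      then have "conf_le (h q) v" using h gs2 by blast
      then show "sgn (real_of_int (v$i)) * (lam q * real_of_int (h q $ i)) = lam q * real_of_int \<bar>h q $ i\<bar>"
        using sgn_conf[of "h q" v i] by (simp add: algebra_simps)
    qed
    also have "\<dots> \<ge> lam p * real_of_int \<bar>h p $ i\<bar>"
      using that T(1) lam0 by (intro member_le_sum) auto
    finally show ?thesis .
  qed
  have obj: "real_of_int (- objval c v) = (\<Sum>p\<in>T. lam p * real_of_int (- objval c (h p)))"
    by (simp add: objval_rv rep inner_sum_right sum_negf)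
  also have "\<dots> \<le> (\<Sum>p\<in>T. 2 * real_of_int D)"
  proof (intro sum_mono)
    fix p assume p: "p \<in> T"
    then have hp: "h p \<in> graver A" "conf_le (h p) v" using h gs2 by blast+
    show "lam p * real_of_int (- objval c (h p)) \<le> 2 * real_of_int D"
      by (rule term_bound[OF fx fv hp lam0[OF p] bnd[OF p] maxp Dpos])
  qed
  also have "\<dots> = real (card T) * (2 * real_of_int D)" by simp
  also have "\<dots> \<le> real CARD('n) * (2 * real_of_int D)"
    using cardT Dpos by (intro mult_right_mono) auto
  finally show ?thesis by simp
qed



lemma ln2_le: "ln (2::real) \<le> 3/4"
proof -
  have "(1 + (3/4) / real (8::nat)) ^ 8 \<le> exp (3/4::real)"
    by (rule exp_ge_one_plus_x_over_n_power_n) auto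
  moreover have "(2::real) \<le> (1 + (3/4) / real (8::nat)) ^ 8" by (simp add: power_def)
  ultimately have "2 \<le> exp (3/4::real)" by linarith
  then have "ln 2 \<le> ln (exp (3/4::real))" by (subst ln_le_cancel_iff) auto
  then show ?thesis by simp
qed

lemma final_arith:
  fixes N :: real and g :: int and k :: nat
  assumes N: "N \<ge> 2" and g: "g \<ge> 1" and h: "1 \<le> real_of_int g * (1 - 1 / (2 * N)) ^ k"
  shows "real (Suc k) \<le> max 1 ((4 * N - 4) * log 2 (real_of_int g))"
proof (cases "g = 1")
  case True
  have q: "0 < 1 - 1 / (2 * N)" "1 - 1 / (2 * N) < 1" using N by (auto simp: field_simps)
  have "k = 0"
  proof (rule ccontr)
    assume "k \<noteq> 0"
    then have "(1 - 1 / (2 * N)) ^ k < 1" using q by (intro power_less_one_iff[THEN iffD2]) auto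
    then show False using h True by simp
  qed
  then show ?thesis by simp
next
  case False
  then have g2: "real_of_int g \<ge> 2" using g by linarith
  define q where "q = 1 - 1 / (2 * N)"
  have q: "0 < q" "q - 1 = - 1 / (2 * N)" using N by (auto simp: field_simps q_def)
  define L where "L = ln (real_of_int g)"
  define l where "l = ln (2::real)"
  have l: "0 < l" "l \<le> 3/4" using ln2_le by (auto simp: l_def)
  have Ll: "l \<le> L" unfolding l_def L_def using g2 by (subst ln_le_cancel_iff) auto
  have "ln 1 \<le> ln (real_of_int g * q ^ k)"
    using h q g2 by (subst ln_le_cancel_iff) (auto simp: q_def)
  also have "\<dots> = L + real k * ln q" using q g2 by (simp add: ln_mult ln_realpow L_def)
  finally have a: "0 \<le> L + real k * ln q" by simp
  have "ln q \<le> - 1 / (2 * N)" using ln_le_minus_one[OF q(1)] q(2) by simp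
  then have "real k * ln q \<le> real k * (- 1 / (2 * N))" by (intro mult_left_mono) auto
  with a have "real k / (2 * N) \<le> L" by simp
  then have kL: "real k \<le> 2 * N * L" using N by (simp add: field_simps)
  have NL1: "N * L * l \<le> N * L * (3/4)" using l N Ll by (intro mult_left_mono) auto
  have NL2: "2 * L \<le> N * L" using N Ll l by (intro mult_right_mono) auto
  have "l * (1 + 2 * N * L) \<le> (4 * N - 4) * L"
  proof -
    have "l * (1 + 2 * N * L) = l + 2 * (N * L * l)" by (simp add: algebra_simps)
    then show ?thesis using NL1 NL2 Ll by (simp add: algebra_simps)
  qed
  then have "1 + 2 * N * L \<le> (4 * N - 4) * L / l" using l by (simp add: field_simps)
  also have "\<dots> = (4 * N - 4) * log 2 (real_of_int g)" by (simp add: log_def L_def l_def)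
  finally show ?thesis using kL by simp
qed



theorem lemma1:
  fixes A :: "int^'n^'d" and b :: "int^'d" and c u x0 xmin :: "int^'n"
  assumes "CARD('n) \<ge> 2"
    and "\<forall>i. u$i \<ge> 0"
    and "feasible A b u x0" and "\<not> optimal A b u c x0"
    and "optimal A b u c xmin"
  shows "\<forall>(m::nat) (xs::nat \<Rightarrow> int^'n). xs 0 = x0 \<and> (\<forall>k<m. dd_step A b u c (xs k) (xs (Suc k))) \<longrightarrow>
           real m \<le> max 1 ((4 * real CARD('n) - 4) * log 2 (real_of_int (objval c (x0 - xmin))))
           \<and> ((\<nexists>y. dd_step A b u c (xs m) y) \<longrightarrow> optimal A b u c (xs m))"
proof (intro allI impI)
  fix m :: nat and xs :: "nat \<Rightarrow> int^'n"
  assume H: "xs 0 = x0 \<and> (\<forall>k<m. dd_step A b u c (xs k) (xs (Suc k)))"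
  then have x00: "xs 0 = x0" and st: "\<And>k. k < m \<Longrightarrow> dd_step A b u c (xs k) (xs (Suc k))" by auto
  define N where "N = real CARD('n)"
  have N2: "N \<ge> 2" using assms(1) by (simp add: N_def)
  define q where "q = 1 - 1 / (2 * N)"
  define gap where "gap k = objval c (xs k) - objval c xmin" for k
  have fxmin: "feasible A b u xmin" using assms(5) by (simp add: optimal_def)
  have xminle: "feasible A b u y \<Longrightarrow> objval c xmin \<le> objval c y" for y
    using assms(5) by (simp add: optimal_def)
  have feas: "k \<le> m \<Longrightarrow> feasible A b u (xs k)" for k
  proof (induction k)
    case 0 then show ?case using x00 assms(3) by simp
  next
    case (Suc k)
    then have "dd_step A b u c (xs k) (xs (Suc k))" using st by simp
    then obtain z \<alpha> where "feasible A b u (xs k + \<alpha> *s z)" "xs (Suc k) = xs k + \<alpha> *s z"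
      unfolding dd_step_def by blast
    then show ?case by simp
  qed
  have gap_nonneg: "k \<le> m \<Longrightarrow> gap k \<ge> 0" for k
    using xminle[OF feas] by (simp add: gap_def)
  have step: "gap (Suc k) \<le> gap k - 1 \<and> real_of_int (gap (Suc k)) \<le> q * real_of_int (gap k)" if k: "k < m" for k
  proof -
    obtain z \<alpha> where z: "z \<in> graver A" "\<alpha> > 0" "feasible A b u (xs k + \<alpha> *s z)"
      and maxp: "\<forall>z' \<alpha>'. z' \<in> graver A \<and> \<alpha>' > 0 \<and> feasible A b u (xs k + \<alpha>' *s z') \<longrightarrow>
            - \<alpha>' * objval c z' \<le> - \<alpha> * objval c z"
      and pos: "- \<alpha> * objval c z > 0" and nx: "xs (Suc k) = xs k + \<alpha> *s z"
      using st[OF k] unfolding dd_step_def by blast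
    define D where "D = - \<alpha> * objval c z"
    have fk: "feasible A b u (xs k)" using feas k by simp
    have fv: "feasible A b u (xs k + (xmin - xs k))" using fxmin by simp
    have kb: "real_of_int (- objval c (xmin - xs k)) \<le> 2 * real CARD('n) * real_of_int D"
      by (rule key_bound[OF fk fv, of c D]) (use maxp pos in \<open>auto simp: D_def\<close>)
    have g1: "- objval c (xmin - xs k) = gap k" by (simp add: objval_diff gap_def)
    have g2: "gap (Suc k) = gap k - D" by (simp add: gap_def nx objval_add objval_smult D_def)
    have Dpos: "D > 0" using pos by (simp add: D_def)
    have "real_of_int (gap k) \<le> 2 * N * real_of_int D" using kb g1 by (simp add: N_def)
    then have "real_of_int (gap k) / (2 * N) \<le> real_of_int D" using N2 by (simp add: field_simps)
    then have "real_of_int (gap (Suc k)) \<le> q * real_of_int (gap k)"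
      using g2 by (simp add: q_def algebra_simps)
    then show ?thesis using g2 Dpos by simp
  qed
  have decay: "k \<le> m \<Longrightarrow> real_of_int (gap k) \<le> real_of_int (gap 0) * q ^ k" for k
  proof (induction k)
    case 0 then show ?case by simp
  next
    case (Suc k)
    then have "real_of_int (gap (Suc k)) \<le> q * real_of_int (gap k)" using step by simp
    also have "\<dots> \<le> q * (real_of_int (gap 0) * q ^ k)"
      using Suc N2 by (intro mult_left_mono) (auto simp: q_def field_simps)
    finally show ?case by (simp add: algebra_simps)
  qed
  have g0: "objval c (x0 - xmin) = gap 0" by (simp add: objval_diff gap_def x00)
  have g0pos: "gap 0 \<ge> 1"
  proof -
    obtain y where y: "feasible A b u y" "objval c y < objval c x0"
      using assms(3,4) unfolding optimal_def by (auto simp: not_le)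
    then show ?thesis using xminle[OF y(1)] by (simp add: gap_def x00)
  qed
  show "real m \<le> max 1 ((4 * real CARD('n) - 4) * log 2 (real_of_int (objval c (x0 - xmin))))
           \<and> ((\<nexists>y. dd_step A b u c (xs m) y) \<longrightarrow> optimal A b u c (xs m))"
  proof
    show "real m \<le> max 1 ((4 * real CARD('n) - 4) * log 2 (real_of_int (objval c (x0 - xmin))))"
    proof (cases m)
      case 0 then show ?thesis by simp
    next
      case (Suc k)
      then have "gap k \<ge> 1" using step[of k] gap_nonneg[of m] by simp
      then have "1 \<le> real_of_int (gap 0) * q ^ k" using decay[of k] Suc by simp
      then have "real (Suc k) \<le> max 1 ((4 * N - 4) * log 2 (real_of_int (gap 0)))"
        using final_arith[OF N2 g0pos] by (simp add: q_def)
      then show ?thesis using Suc g0 by (simp add: N_def)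
    qed
    show "(\<nexists>y. dd_step A b u c (xs m) y) \<longrightarrow> optimal A b u c (xs m)"
      using dd_step_exists[OF feas[OF order_refl]] by blast
  qed
qed

end
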